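(* Let $p$ be a prime, $q=p^l$, $m\ge1$, $n=2m$. For any $0\leqslant r<n(q-1)$ and $I\subseteq M_r$, the code $\mathcal{C}_q(r,I,n)$ is affine-invariant, i.e. for every $a\in\mathbb{F}_{q^n}^*$ and $b\in\mathbb{F}_{q^n}$, if $(c_g)_{g\in\mathbb{F}_{q^n}}\in\mathcal{C}_q(r,I,n)$ then the vector $(c'_g)_{g\in\mathbb{F}_{q^n}}$ with $c'_{ag+b}=c_g$ for all $g$ also lies in $\mathcal{C}_q(r,I,n)$.
   Context: Let $N=q^n-1$ and $\alpha$ a primitive element of $\mathbb{F}_{q^n}$. Every integer $0\le u\le q^n-1$ is written $u=\sum_{i=0}^{n-1}u_iq^i$, $u_i\in\{0,\dots,q-1\}$; $\mathrm{wt}_q(u)=\sum u_i$, $O(u)=\sum_{i\text{ odd}}u_i$, $E(u)=\sum_{i\text{ even}}u_i$. For $-1\le r<n(q-1)$, $Z_r=\{\alpha^u\mid 0<u\le q^n-1,\ \mathrm{wt}_q(u)\le n(q-1)-r-1\}$. For $0\le r\le n(q-1)$ and integer $k\ge0$, $\Theta^{(r)}_k=\{\alpha^u\mid 0\le u\le q^n-1,\ \mathrm{wt}_q(u)=n(q-1)-r,\ |O(u)-E(u)|=k\}$. $M_r$ is the set of even (resp. odd) integers $k\in[0,m(q-1)]$ when $r$ is even (resp. odd). For $I\subseteq M_r$, $\overline I=M_r\setminus I$ and $Z_{r,I}=Z_r\cup\bigcup_{k\in\overline I}\Theta^{(r)}_k$. A cyclic code of length $N$ over $\mathbb{F}_q$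 with zero set $Z$ is $\{(c_0,\dots,c_{N-1})\in\mathbb{F}_q^N\mid \sum_{i}c_i\beta^i=0\ \forall\beta\in Z\}$; coordinate $i$ is labelled by the field element $\alpha^i$. $\mathcal{C}_q(r,I,n)^*$ is the cyclic code with zero set $Z_{r,I}$, and $\mathcal{C}_q(r,I,n)$ is its extended code: its coordinates are indexed by $\mathbb{F}_{q^n}$, with $c_{\alpha^i}=c_i$ and the extra coordinate labelled $0\in\mathbb{F}_{q^n}$ equal to $-\sum_i c_i$. *)

theory Defs
  imports "HOL-Computational_Algebra.Primes"
begin

definition qdigit :: "nat \<Rightarrow> nat \<Rightarrow> nat \<Rightarrow> nat" where
  "qdigit q i u = (u div q ^ i) mod q"

definition wtq :: "nat \<Rightarrow> nat \<Rightarrow> nat \<Rightarrow> nat" where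
  "wtq q n u = (\<Sum>i<n. qdigit q i u)"

definition Odig :: "nat \<Rightarrow> nat \<Rightarrow> nat \<Rightarrow> nat" where
  "Odig q n u = (\<Sum>i\<in>{i. i < n \<and> odd i}. qdigit q i u)"

definition Edig :: "nat \<Rightarrow> nat \<Rightarrow> nat \<Rightarrow> nat" where
  "Edig q n u = (\<Sum>i\<in>{i. i < n \<and> even i}. qdigit q i u)"

definition primitive_elem :: "'k::{finite,field} \<Rightarrow> bool" where
  "primitive_elem \<alpha> \<longleftrightarrow> \<alpha> \<noteq> 0 \<and> (\<forall>x. x \<noteq> 0 \<longrightarrow> (\<exists>i::nat. x = \<alpha> ^ i))"

definition Zset :: "nat \<Rightarrow> nat \<Rightarrow> 'k::{finite,field} \<Rightarrow> nat \<Rightarrow> 'k set" where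
  "Zset q n \<alpha> r = {\<alpha> ^ u | u. 0 < u \<and> u \<le> q ^ n - 1 \<and> wtq q n u \<le> n * (q - 1) - r - 1}"

definition Theta :: "nat \<Rightarrow> nat \<Rightarrow> 'k::{finite,field} \<Rightarrow> nat \<Rightarrow> nat \<Rightarrow> 'k set" where
  "Theta q n \<alpha> r k = {\<alpha> ^ u | u. u \<le> q ^ n - 1 \<and> wtq q n u = n * (q - 1) - r
      \<and> \<bar>int (Odig q n u) - int (Edig q n u)\<bar> = int k}"

definition Mset :: "nat \<Rightarrow> nat \<Rightarrow> nat \<Rightarrow> nat set" where
  "Mset q m r = {k. k \<le> m * (q - 1) \<and> (even k \<longleftrightarrow> even r)}"

definition ZrI :: "nat \<Rightarrow> nat \<Rightarrow> nat \<Rightarrow> 'k::{finite,field} \<Rightarrow> nat \<Rightarrow> nat set \<Rightarrow> 'k set" where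
  "ZrI q m n \<alpha> r I = Zset q n \<alpha> r \<union> (\<Union>k\<in>Mset q m r - I. Theta q n \<alpha> r k)"

text \<open>Cyclic code of length N over F_q (the subfield {x. x^q = x} of the field type),
  vectors represented as nat-indexed functions, coordinates i < N.\<close>
definition cyclic_code :: "nat \<Rightarrow> nat \<Rightarrow> 'k::{finite,field} set \<Rightarrow> (nat \<Rightarrow> 'k) set" where
  "cyclic_code q N Z = {v. (\<forall>i<N. v i ^ q = v i) \<and> (\<forall>\<beta>\<in>Z. (\<Sum>i<N. v i * \<beta> ^ i) = 0)}"

definition extended_code :: "nat \<Rightarrow> nat \<Rightarrow> 'k::{finite,field} \<Rightarrow> 'k set \<Rightarrow> ('k \<Rightarrow> 'k) set" where
  "extended_code q N \<alpha> Z = {c. (\<lambda>i. c (\<alpha> ^ i)) \<in> cyclic_code q N Z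
      \<and> c 0 = - (\<Sum>i<N. c (\<alpha> ^ i))}"

definition Ccode :: "nat \<Rightarrow> nat \<Rightarrow> nat \<Rightarrow> 'k::{finite,field} \<Rightarrow> nat \<Rightarrow> nat set \<Rightarrow> ('k \<Rightarrow> 'k) set" where
  "Ccode q m n \<alpha> r I = extended_code q (q ^ n - 1) \<alpha> (ZrI q m n \<alpha> r I)"

end

theory Submission
  imports Defs "HOL-Number_Theory.Number_Theory"
begin

definition dle :: "nat \<Rightarrow> nat \<Rightarrow> nat \<Rightarrow> bool" where
  "dle q k u \<longleftrightarrow> (\<forall>i. qdigit q i k \<le> qdigit q i u)"

lemma qdigit_0: "qdigit q 0 x = x mod q"
  by (simp add: qdigit_def)

lemma qdigit_Suc: "qdigit q (Suc i) x = qdigit q i (x div q)"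
  by (simp add: qdigit_def div_mult2_eq)

lemma dle_le:
  assumes "dle q k u" "q > 1"
  shows "k \<le> u"
  using assms
proof (induction k arbitrary: u rule: less_induct)
  case (less k)
  show ?case
  proof (cases "k = 0")
    case True then show ?thesis by simp
  next
    case False
    have "dle q (k div q) (u div q)"
      using less.prems(1) unfolding dle_def by (metis qdigit_Suc)
    moreover have "k div q < k" using False less.prems(2)
      by (simp add: div_less_dividend)
    ultimately have "k div q \<le> u div q" using less by blast
    moreover have "k mod q \<le> u mod q"
      using less.prems(1) unfolding dle_def by (metis qdigit_0)
    ultimately have "q * (k div q) + k mod q \<le> q * (u div q) + u mod q"
      by (meson add_le_mono mult_le_mono2)
    then show ?thesis by simp
  qed
qed

lemma digits_eq_mod:
  assumes "\<forall>i<n. qdigit q i x = qdigit q i y"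
  shows "x mod q ^ n = y mod q ^ n"
  using assms
proof (induction n arbitrary: x y)
  case 0 then show ?case by simp
next
  case (Suc n)
  have "x div q mod q ^ n = y div q mod q ^ n"
    using Suc.prems by (intro Suc.IH) (metis Suc_mono qdigit_Suc)
  moreover have "x mod q = y mod q" using Suc.prems qdigit_0 by (metis zero_less_Suc)
  ultimately show ?case by (simp add: mod_mult2_eq)
qed

lemma dle_wt:
  assumes "dle q k u" "q > 1" "k \<noteq> u" "u < q ^ n"
  shows "wtq q n k < wtq q n u"
proof -
  have ku: "k < q ^ n" using dle_le[OF assms(1,2)] assms(4) by simp
  have "\<exists>i<n. qdigit q i k \<noteq> qdigit q i u"
  proof (rule ccontr)
    assume "\<not> ?thesis"
    then have "k mod q ^ n = u mod q ^ n" by (intro digits_eq_mod) auto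
    then show False using ku assms(3,4) by simp
  qed
  then obtain i where "i < n" "qdigit q i k < qdigit q i u"
    using assms(1) unfolding dle_def by (meson le_neq_implies_less)
  then show ?thesis unfolding wtq_def
    by (intro sum_strict_mono_ex1) (use assms(1) dle_def in auto)
qed

lemma sum_group_pow:
  fixes w :: "'b \<Rightarrow> 'a::comm_semiring_1"
  assumes "finite S"
  shows "(\<Sum>x\<in>S. w x * g ^ f x) = (\<Sum>y\<in>f ` S. (\<Sum>x\<in>{x\<in>S. f x = y}. w x) * g ^ y)"
  by (subst sum.image_gen[OF assms]) (auto simp: sum_distrib_right intro!: sum.cong)

lemma expand:
  fixes b :: "'a::comm_ring_1"
  assumes frob: "\<And>x y::'a. (x + y) ^ q = x ^ q + y ^ q" and q: "q > 1"
  shows "\<exists>D e. finite D \<and> (\<forall>k\<in>D. dle q k u) \<and> (\<forall>g. (g + b) ^ u = (\<Sum>k\<in>D. e k * g ^ k))"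
proof (induction u arbitrary: b rule: less_induct)
  case (less u)
  show ?case
  proof (cases "u = 0")
    case True
    then show ?thesis
      by (intro exI[of _ "{0}"] exI[of _ "\<lambda>_. 1"]) (auto simp: dle_def)
  next
    case False
    define d where "d = u mod q"
    define u' where "u' = u div q"
    have "u' < u" using False q unfolding u'_def by simp
    then obtain D' e' where D': "finite D'" "\<forall>k\<in>D'. dle q k u'"
      "\<forall>g. (g + b ^ q) ^ u' = (\<Sum>k\<in>D'. e' k * g ^ k)"
      using less[of u' "b ^ q"] by blast
    define S where "S = {..d} \<times> D'"
    define f where "f = (\<lambda>(i::nat, k). i + q * k)"
    define w where "w = (\<lambda>(i, k). of_nat (d choose i) * b ^ (d - i) * e' k :: 'a)"
    have calc: "(g + b) ^ u = (\<Sum>x\<in>S. w x * g ^ f x)" for g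
    proof -
      have u: "u = d + q * u'" unfolding d_def u'_def by simp
      have "(g + b) ^ u = (g + b) ^ d * ((g + b) ^ q) ^ u'"
        by (simp add: u power_add power_mult)
      also have "\<dots> = (\<Sum>i\<le>d. of_nat (d choose i) * g ^ i * b ^ (d - i)) * (\<Sum>k\<in>D'. e' k * (g ^ q) ^ k)"
        by (simp only: frob D'(3) binomial_ring[of g b d])
      also have "\<dots> = (\<Sum>i\<le>d. \<Sum>k\<in>D'. (of_nat (d choose i) * g ^ i * b ^ (d - i)) * (e' k * (g ^ q) ^ k))"
        by (simp add: sum_product)
      also have "\<dots> = (\<Sum>x\<in>S. w x * g ^ f x)"
        unfolding S_def by (subst sum.cartesian_product)
          (auto simp: w_def f_def power_add mult_ac simp flip: power_mult intro!: sum.cong)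
      finally show ?thesis .
    qed
    have fin: "finite S" using D'(1) by (simp add: S_def)
    have eq: "(g + b) ^ u = (\<Sum>y\<in>f ` S. (\<Sum>x\<in>{x\<in>S. f x = y}. w x) * g ^ y)" for g
      by (subst calc) (rule sum_group_pow[OF fin])
    have "\<forall>k\<in>f ` S. dle q k u"
    proof
      fix k assume "k \<in> f ` S"
      then obtain i k' where ik: "i \<le> d" "k' \<in> D'" "k = i + q * k'"
        by (auto simp: S_def f_def)
      have id: "i < q" using ik(1) q unfolding d_def
        by (meson le_less_trans mod_less_divisor zero_less_one less_trans)
      show "dle q k u" unfolding dle_def
      proof
        fix j show "qdigit q j k \<le> qdigit q j u"
        proof (cases j)
          case 0 then show ?thesis using ik id by (simp add: qdigit_0 d_def)
        next
          case (Suc j')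
          have "k div q = k'" using ik id by simp
          then show ?thesis using D'(2) ik(2) Suc by (simp add: qdigit_Suc dle_def u'_def)
        qed
      qed
    qed
    then show ?thesis using finite_imageI[OF fin, of f] eq
      by (intro exI[of _ "f ` S"] exI[of _ "\<lambda>y. \<Sum>x\<in>{x\<in>S. f x = y}. w x"]) blast
  qed
qed

lemma pow_card_1:
  fixes x :: "'k::{finite,field}"
  assumes "x \<noteq> 0"
  shows "x ^ (card (UNIV :: 'k set) - 1) = 1"
proof -
  have "(\<Prod>y\<in>UNIV-{0}. x * y) = (\<Prod>y\<in>UNIV-{0::'k}. y)"
    by (rule prod.reindex_bij_witness[of _ "\<lambda>y. y / x" "\<lambda>y. x * y"]) (use assms in auto)
  moreover have "(\<Prod>y\<in>UNIV-{0}. x * y) = x ^ card (UNIV - {0::'k}) * (\<Prod>y\<in>UNIV-{0::'k}. y)"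
    by (simp add: prod.distrib)
  moreover have "(\<Prod>y\<in>UNIV-{0::'k}. y) \<noteq> 0" by simp
  moreover have "card (UNIV - {0::'k}) = card (UNIV :: 'k set) - 1"
    by (simp add: card_Diff_singleton)
  ultimately show ?thesis by simp
qed

lemma prim_bij:
  fixes \<alpha> :: "'k::{finite,field}"
  assumes "primitive_elem \<alpha>" "N = card (UNIV :: 'k set) - 1"
  shows "bij_betw (\<lambda>i. \<alpha> ^ i) {..<N} (UNIV - {0})"
proof -
  have a0: "\<alpha> \<noteq> 0" using assms(1) by (simp add: primitive_elem_def)
  have aN: "\<alpha> ^ N = 1" using pow_card_1[OF a0] assms(2) by simp
  have Npos: "N > 0"
  proof -
    have "card (UNIV :: 'k set) \<ge> card {0, 1::'k}" by (rule card_mono) auto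
    then show ?thesis using assms(2) by simp
  qed
  have img: "(\<lambda>i. \<alpha> ^ i) ` {..<N} = UNIV - {0}"
  proof
    show "(\<lambda>i. \<alpha> ^ i) ` {..<N} \<subseteq> UNIV - {0}" using a0 by auto
    show "UNIV - {0} \<subseteq> (\<lambda>i. \<alpha> ^ i) ` {..<N}"
    proof
      fix x assume "x \<in> UNIV - {0::'k}"
      then obtain i where i: "x = \<alpha> ^ i" using assms(1) by (auto simp: primitive_elem_def)
      have "\<alpha> ^ i = \<alpha> ^ (N * (i div N) + i mod N)" using mult_div_mod_eq[of N i] by simp
      also have "\<dots> = \<alpha> ^ (i mod N)" by (simp only: power_add power_mult aN) simp
      finally show "x \<in> (\<lambda>i. \<alpha> ^ i) ` {..<N}" using i Npos by auto
    qed
  qed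
  moreover have "card ((\<lambda>i. \<alpha> ^ i) ` {..<N}) = card {..<N}"
    using img assms(2) by (simp add: card_Diff_singleton)
  ultimately show ?thesis unfolding bij_betw_def
    by (auto intro: eq_card_imp_inj_on)
qed

lemma char_p:
  assumes "prime p" "card (UNIV :: 'k::{finite,field} set) = p ^ e"
  shows "CHAR('k) = p"
proof -
  have "CHAR('k) > 0" by (rule finite_imp_CHAR_pos) simp
  then have pc: "prime CHAR('k)" by (rule prime_CHAR_semidom)
  have "CHAR('k) dvd p ^ e" using CHAR_dvd_CARD[where 'a='k] assms(2) by simp
  then have "CHAR('k) dvd p" using pc prime_dvd_power by blast
  then show ?thesis using pc assms(1) by (simp add: primes_dvd_imp_eq)
qed

theorem theorem3p11:
  fixes p l q m n r :: nat and I :: "nat set" and \<alpha> :: "'k::{finite,field}"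
    and a b :: 'k and c :: "'k \<Rightarrow> 'k"
  assumes "prime p" and "l \<ge> 1" and "q = p ^ l" and "m \<ge> 1" and "n = 2 * m"
    and "card (UNIV :: 'k set) = q ^ n"
    and "primitive_elem \<alpha>"
    and "r < n * (q - 1)"
    and "I \<subseteq> Mset q m r"
    and "a \<noteq> 0"
    and "c \<in> Ccode q m n \<alpha> r I"
  shows "(\<lambda>h. c ((h - b) / a)) \<in> Ccode q m n \<alpha> r I"
proof -
  define N where "N = q ^ n - 1"
  define Z where "Z = ZrI q m n \<alpha> r I"
  define c' where "c' = (\<lambda>h. c ((h - b) / a))"
  have p2: "p \<ge> 2" using assms(1) prime_ge_2_nat by blast
  have q1: "q > 1" using one_less_power[of p l] assms(2,3) p2 by simp
  have NC: "N = card (UNIV :: 'k set) - 1" using assms(6) N_def by simp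
  have char: "CHAR('k) = p"
    using char_p[OF assms(1), of "l * n"] assms(3,6) by (simp add: power_mult)
  have pc: "prime CHAR('k)" using char assms(1) by simp
  have frob: "(x + y) ^ q = x ^ q + y ^ q" for x y :: 'k
    using freshmans_dream'[OF pc, of q l] char assms(3) by simp
  have frob_sum: "(sum f A) ^ q = (\<Sum>i\<in>A. f i ^ q)" for f :: "'b \<Rightarrow> 'k" and A
    using freshmans_dream_sum'[OF pc, of q l] char assms(3) by simp
  have frob_neg: "(- x) ^ q = - (x ^ q)" for x :: 'k
  proof -
    have "((- x) + x) ^ q = 0" using q1 by simp
    then show ?thesis unfolding frob by (simp add: add_eq_0_iff2)
  qed
  have bij: "bij_betw (\<lambda>i. \<alpha> ^ i) {..<N} (UNIV - {0})" by (rule prim_bij[OF assms(7) NC])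
  have enum: "(\<Sum>i<N. F (\<alpha> ^ i)) = (\<Sum>x\<in>UNIV - {0}. F x)" for F :: "'k \<Rightarrow> 'k"
    using sum.reindex_bij_betw[OF bij, of F] by simp
  have split0: "(\<Sum>x\<in>UNIV. F x) = F 0 + (\<Sum>x\<in>UNIV - {0}. F x)" for F :: "'k \<Rightarrow> 'k"
    by (simp add: sum.remove)
  from assms(11) have cv: "\<forall>i<N. c (\<alpha> ^ i) ^ q = c (\<alpha> ^ i)"
    and cz: "\<forall>\<beta>\<in>Z. (\<Sum>i<N. c (\<alpha> ^ i) * \<beta> ^ i) = 0"
    and c0: "c 0 = - (\<Sum>i<N. c (\<alpha> ^ i))"
    unfolding Ccode_def extended_code_def cyclic_code_def N_def Z_def by auto
  have cq: "c x ^ q = c x" for x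
  proof (cases "x = 0")
    case True
    then show ?thesis using c0 cv by (simp add: frob_neg frob_sum)
  next
    case False
    then obtain i where "i < N" "x = \<alpha> ^ i" using bij unfolding bij_betw_def by auto
    then show ?thesis using cv by simp
  qed
  have csum: "(\<Sum>x\<in>UNIV. c x) = 0"
    using split0[of c] c0 enum[of c] by simp
  have ck: "(\<Sum>x\<in>UNIV. c x * x ^ k) = 0" if "k > 0" "\<alpha> ^ k \<in> Z" for k
  proof -
    have "(\<Sum>x\<in>UNIV. c x * x ^ k) = (\<Sum>x\<in>UNIV - {0}. c x * x ^ k)"
      using split0[of "\<lambda>x. c x * x ^ k"] that(1) by simp
    also have "\<dots> = (\<Sum>i<N. c (\<alpha> ^ i) * (\<alpha> ^ i) ^ k)"
      using enum[of "\<lambda>x. c x * x ^ k"] by simp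
    also have "\<dots> = (\<Sum>i<N. c (\<alpha> ^ i) * (\<alpha> ^ k) ^ i)"
      by (simp add: power_mult[symmetric] mult.commute)
    also have "\<dots> = 0" using cz that(2) by blast
    finally show ?thesis .
  qed
  have aff: "(\<Sum>h\<in>UNIV. F (c' h) h) = (\<Sum>g\<in>UNIV. F (c g) (a * g + b))" for F :: "'k \<Rightarrow> 'k \<Rightarrow> 'k"
    by (rule sum.reindex_bij_witness[of _ "\<lambda>g. a * g + b" "\<lambda>h. (h - b) / a"])
       (use assms(10) in \<open>auto simp: c'_def field_simps\<close>)
  have c'sum: "(\<Sum>x\<in>UNIV. c' x) = 0" using aff[of "\<lambda>v h. v"] csum by simp
  have part1: "\<forall>i<N. c' (\<alpha> ^ i) ^ q = c' (\<alpha> ^ i)" using cq by (simp add: c'_def)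
  have part3: "c' 0 = - (\<Sum>i<N. c' (\<alpha> ^ i))"
    using split0[of c'] c'sum enum[of c'] by (simp add: eq_neg_iff_add_eq_0)
  have part2: "(\<Sum>i<N. c' (\<alpha> ^ i) * \<beta> ^ i) = 0" if Zb: "\<beta> \<in> Z" for \<beta>
  proof -
    obtain u where u: "\<beta> = \<alpha> ^ u" "0 < u" "u \<le> N" "wtq q n u \<le> n * (q - 1) - r"
    proof -
      consider "\<beta> \<in> Zset q n \<alpha> r" | k where "\<beta> \<in> Theta q n \<alpha> r k"
        using Zb unfolding Z_def ZrI_def by blast
      then show ?thesis
      proof cases
        case 1
        then show ?thesis using that unfolding Zset_def N_def by fastforce
      next
        case 2
        then obtain u where "\<beta> = \<alpha> ^ u" "u \<le> N" "wtq q n u = n * (q - 1) - r"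
          unfolding Theta_def N_def by blast
        moreover have "u > 0"
        proof (rule ccontr)
          assume "\<not> u > 0"
          then have "wtq q n u = 0" by (simp add: wtq_def qdigit_def)
          then show False using calculation assms(8) by simp
        qed
        ultimately show ?thesis using that by auto
      qed
    qed
    have key: "(\<Sum>g\<in>UNIV. c g * g ^ k) = 0" if "dle q k u" for k
    proof (cases "k = 0")
      case True then show ?thesis using csum by simp
    next
      case False
      have "\<alpha> ^ k \<in> Z"
      proof (cases "k = u")
        case True then show ?thesis using u \<open>\<beta> \<in> Z\<close> by simp
      next
        case ne: False
        have "u < q ^ n" proof -
          have "q ^ n > 0" using q1 by simp
          then show ?thesis using u(3) unfolding N_def by linarith
        qed
        then have "wtq q n k < wtq q n u" using dle_wt[OF that q1 ne] by simp
        moreover have "k \<le> N" using dle_le[OF that q1] u(3) by simp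
        ultimately have "\<alpha> ^ k \<in> Zset q n \<alpha> r"
          unfolding Zset_def N_def using u(4) False by fastforce
        then show ?thesis unfolding Z_def ZrI_def by blast
      qed
      then show ?thesis using ck False by blast
    qed
    obtain D e where D: "finite D" "\<forall>k\<in>D. dle q k u" "\<forall>g. (g + b / a) ^ u = (\<Sum>k\<in>D. e k * g ^ k)"
      using expand[OF frob q1, of u "b / a"] by blast
    have "(\<Sum>i<N. c' (\<alpha> ^ i) * \<beta> ^ i) = (\<Sum>i<N. c' (\<alpha> ^ i) * (\<alpha> ^ i) ^ u)"
      by (simp add: u(1) power_mult[symmetric] mult.commute)
    also have "\<dots> = (\<Sum>x\<in>UNIV - {0}. c' x * x ^ u)"
      using enum[of "\<lambda>x. c' x * x ^ u"] by simp
    also have "\<dots> = (\<Sum>x\<in>UNIV. c' x * x ^ u)"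
      using split0[of "\<lambda>x. c' x * x ^ u"] u(2) by simp
    also have "\<dots> = (\<Sum>g\<in>UNIV. c g * (a * g + b) ^ u)"
      using aff[of "\<lambda>v h. v * h ^ u"] by simp
    also have "\<dots> = (\<Sum>g\<in>UNIV. c g * (a ^ u * (\<Sum>k\<in>D. e k * g ^ k)))"
    proof (rule sum.cong[OF refl])
      fix g
      have "a * g + b = a * (g + b / a)" using assms(10) by (simp add: field_simps)
      then show "c g * (a * g + b) ^ u = c g * (a ^ u * (\<Sum>k\<in>D. e k * g ^ k))"
        using D(3) by (simp add: power_mult_distrib)
    qed
    also have "\<dots> = a ^ u * (\<Sum>k\<in>D. e k * (\<Sum>g\<in>UNIV. c g * g ^ k))"
      by (simp add: sum_distrib_left mult_ac sum.swap[of _ UNIV D])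
    also have "\<dots> = 0" using key D(2) by simp
    finally show ?thesis .
  qed
  show ?thesis
    unfolding Ccode_def extended_code_def cyclic_code_def
    using part1 part2 part3 unfolding N_def Z_def c'_def by auto
qed

end
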